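(* For all $0<b<B\le1$ and every integer $n\ge1$ there exists an instance $\langle A,f,c\rangle$ with $|A|=n$, $f$ additive, and $p(\{i\})\le b$ for all $i\in A$, such that $$\frac{\textsc{Max-Reward}(B)}{\textsc{Max-Reward}(b)}=\frac{\textsc{Max-Welfare}(B)}{\textsc{Max-Welfare}(b)}=\min\big(\lceil 2B/b\rceil-1,\,n\big).$$
   Context: An instance $\langle A,f,c\rangle$ consists of a finite set $A$ of agents, a monotone nondecreasing $f:2^A\to[0,1]$, and costs $c_i\ge0$. For $S\subseteq A$, $i\in S$: $f_S(i)=f(S)-f(S\setminus\{i\})$; $p(S)=\sum_{i\in S}c_i/f_S(i)$ (conventions: $0$ if $c_i=0=f_S(i)$, $\infty$ if $c_i>0=f_S(i)$). $f$ is additive if $f(S)=\sum_{i\in S}f(\{i\})$. $\textsc{Max-Reward}(B)=\max\{f(S):p(S)\le B\}$ and $\textsc{Max-Welfare}(B)=\max\{f(S)-\sum_{i\in S}c_i:p(S)\le B\}$. *)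

theory Defs
  imports "HOL-Analysis.Analysis" "HOL-Library.Extended_Real"
begin

definition is_instance :: "'a set \<Rightarrow> ('a set \<Rightarrow> real) \<Rightarrow> ('a \<Rightarrow> real) \<Rightarrow> bool" where
  "is_instance A f c \<longleftrightarrow> finite A
     \<and> (\<forall>S T. S \<subseteq> T \<and> T \<subseteq> A \<longrightarrow> f S \<le> f T)
     \<and> (\<forall>S. S \<subseteq> A \<longrightarrow> 0 \<le> f S \<and> f S \<le> 1)
     \<and> (\<forall>i\<in>A. 0 \<le> c i)"

definition additive_on :: "'a set \<Rightarrow> ('a set \<Rightarrow> real) \<Rightarrow> bool" where
  "additive_on A f \<longleftrightarrow> (\<forall>S. S \<subseteq> A \<longrightarrow> f S = (\<Sum>i\<in>S. f {i}))"

definition marginal :: "('a set \<Rightarrow> real) \<Rightarrow> 'a set \<Rightarrow> 'a \<Rightarrow> real" where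
  "marginal f S i = f S - f (S - {i})"

definition pay_term :: "('a set \<Rightarrow> real) \<Rightarrow> ('a \<Rightarrow> real) \<Rightarrow> 'a set \<Rightarrow> 'a \<Rightarrow> ereal" where
  "pay_term f c S i =
     (if marginal f S i = 0 then (if c i = 0 then 0 else \<infinity>)
      else ereal (c i / marginal f S i))"

definition price :: "('a set \<Rightarrow> real) \<Rightarrow> ('a \<Rightarrow> real) \<Rightarrow> 'a set \<Rightarrow> ereal" where
  "price f c S = (\<Sum>i\<in>S. pay_term f c S i)"

definition max_reward :: "'a set \<Rightarrow> ('a set \<Rightarrow> real) \<Rightarrow> ('a \<Rightarrow> real) \<Rightarrow> real \<Rightarrow> real" where
  "max_reward A f c B = Max {f S | S. S \<subseteq> A \<and> price f c S \<le> ereal B}"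

definition max_welfare :: "'a set \<Rightarrow> ('a set \<Rightarrow> real) \<Rightarrow> ('a \<Rightarrow> real) \<Rightarrow> real \<Rightarrow> real" where
  "max_welfare A f c B = Max {f S - (\<Sum>i\<in>S. c i) | S. S \<subseteq> A \<and> price f c S \<le> ereal B}"

end

theory Submission
  imports Defs
begin

lemma maxlem:
  fixes g :: "nat \<Rightarrow> real" and A :: "nat set"
  assumes "finite A" "j0 \<le> card A" "P j0" "\<And>j. P j \<Longrightarrow> j \<le> card A \<Longrightarrow> j \<le> j0" "mono g"
  shows "Max {g (card S) | S. S \<subseteq> A \<and> P (card S)} = g j0"
proof (rule Max_eqI)
  have "{g (card S) | S. S \<subseteq> A \<and> P (card S)} \<subseteq> (\<lambda>S. g (card S)) ` Pow A" by auto
  then show "finite {g (card S) | S. S \<subseteq> A \<and> P (card S)}"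
    using assms(1) finite_surj by blast
next
  fix y assume "y \<in> {g (card S) | S. S \<subseteq> A \<and> P (card S)}"
  then obtain S where S: "S \<subseteq> A" "P (card S)" "y = g (card S)" by auto
  have "card S \<le> card A" using S(1) assms(1) card_mono by blast
  then have "card S \<le> j0" using assms(4) S(2) by blast
  then show "y \<le> g j0" using S(3) assms(5) by (simp add: monoD)
next
  obtain T where "T \<subseteq> A" "card T = j0" using obtain_subset_with_card_n[OF assms(2)] by blast
  then show "g j0 \<in> {g (card S) | S. S \<subseteq> A \<and> P (card S)}" using assms(3) by auto
qed

theorem mainTheorem13:
  fixes b B :: real and n :: nat
  assumes "0 < b" "b < B" "B \<le> 1" "n \<ge> 1"
  shows "\<exists>(A :: nat set) f c. is_instance A f c \<and> card A = n \<and> additive_on A f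
           \<and> (\<forall>i\<in>A. price f c {i} \<le> ereal b)
           \<and> max_reward A f c B / max_reward A f c b
                = real_of_int (min (\<lceil>2 * B / b\<rceil> - 1) (int n))
           \<and> max_welfare A f c B / max_welfare A f c b
                = real_of_int (min (\<lceil>2 * B / b\<rceil> - 1) (int n))"
proof -
  define k where "k = nat (\<lceil>2 * B / b\<rceil> - 1)"
  have c2: "2 * B / b > 2" using assms by (simp add: field_simps)
  have "\<lceil>2 * B / b\<rceil> \<ge> 3"
  proof -
    have "real_of_int \<lceil>2 * B / b\<rceil> > 2" using c2 le_of_int_ceiling[of "2*B/b"] by linarith
    then show ?thesis by linarith
  qed
  then have kint: "int k = \<lceil>2 * B / b\<rceil> - 1" and k2: "k \<ge> 2" unfolding k_def by linarith+
  have kreal: "real k = real_of_int \<lceil>2 * B / b\<rceil> - 1" using kint by (metis of_int_diff of_int_of_nat_eq of_int_1)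
  have klt: "real k < 2 * B / b" using kreal ceiling_less_cancel[of "2*B/b"]
    by (smt (verit, best) ceiling_correct)
  have kge: "real k \<ge> 2 * B / b - 1" using kreal le_of_int_ceiling[of "2*B/b"] by linarith
  define p where "p = B / real k"
  have kpos: "real k > 0" using k2 by simp
  have pb: "p \<le> b"
  proof -
    have "real k * b \<ge> 2 * B - b" using kge assms(1) by (simp add: field_simps)
    then have "B \<le> real k * b" using assms by linarith
    then show ?thesis unfolding p_def using kpos by (simp add: field_simps)
  qed
  have pb2: "2 * p > b"
  proof -
    have "real k * b < 2 * B" using klt assms(1) by (simp add: field_simps)
    then show ?thesis unfolding p_def using kpos by (simp add: field_simps)
  qed
  have ppos: "p > 0" unfolding p_def using kpos assms by simp
  have plt1: "p < 1" using pb assms by linarith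
  define A :: "nat set" where "A = {0..<n}"
  define f :: "nat set \<Rightarrow> real" where "f S = real (card S) / real n" for S
  define c :: "nat \<Rightarrow> real" where "c i = p / real n" for i
  have npos: "real n > 0" using assms by simp
  have finA: "finite A" and cardA: "card A = n" unfolding A_def by auto
  have inst: "is_instance A f c"
    unfolding is_instance_def
  proof (intro conjI allI impI ballI)
    show "finite A" by fact
  next
    fix S T assume "S \<subseteq> T \<and> T \<subseteq> A"
    then have "card S \<le> card T" using finA by (meson card_mono rev_finite_subset)
    then show "f S \<le> f T" unfolding f_def using npos by (simp add: divide_right_mono)
  next
    fix S assume "S \<subseteq> A" then show "0 \<le> f S" unfolding f_def by simp
  next
    fix S assume "S \<subseteq> A"
    then have "card S \<le> n" using finA cardA card_mono by blast
    then show "f S \<le> 1" unfolding f_def using npos by simp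
  next
    fix i assume "i \<in> A" then show "0 \<le> c i" unfolding c_def using ppos by simp
  qed
  have add: "additive_on A f" unfolding additive_on_def f_def
  proof (intro allI impI)
    fix S assume "S \<subseteq> A"
    then have "finite S" using finA rev_finite_subset by blast
    then show "real (card S) / real n = (\<Sum>i\<in>S. real (card {i}) / real n)"
      by (simp add: sum_divide_distrib[symmetric])
  qed
  have price_eq: "price f c S = ereal (real (card S) * p)" if "S \<subseteq> A" for S
  proof -
    have fS: "finite S" using that finA rev_finite_subset by blast
    have "pay_term f c S i = ereal p" if "i \<in> S" for i
    proof -
      have "card (S - {i}) = card S - 1" using that fS by simp
      moreover have "card S \<ge> 1" using that fS by (metis One_nat_def Suc_leI card_gt_0_iff empty_iff)
      ultimately have "marginal f S i = 1 / real n"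
        unfolding marginal_def f_def by (simp add: diff_divide_distrib[symmetric] of_nat_diff)
      then show ?thesis unfolding pay_term_def c_def using npos by simp
    qed
    then have "price f c S = (\<Sum>i\<in>S. ereal p)" unfolding price_def by simp
    then show ?thesis by simp
  qed
  have single: "\<forall>i\<in>A. price f c {i} \<le> ereal b"
    using price_eq pb by simp
  have setR: "{f S | S. S \<subseteq> A \<and> price f c S \<le> ereal T}
      = {(\<lambda>j. real j / real n) (card S) | S. S \<subseteq> A \<and> real (card S) * p \<le> T}" for T
    using price_eq unfolding f_def by auto
  have setW: "{f S - (\<Sum>i\<in>S. c i) | S. S \<subseteq> A \<and> price f c S \<le> ereal T}
      = {(\<lambda>j. real j * (1 - p) / real n) (card S) | S. S \<subseteq> A \<and> real (card S) * p \<le> T}" for T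
  proof -
    have "f S - (\<Sum>i\<in>S. c i) = real (card S) * (1 - p) / real n" for S
      unfolding f_def c_def using npos by (simp add: field_simps)
    then show ?thesis using price_eq by auto
  qed
  define k0 where "k0 = min k n"
  have monoR: "mono (\<lambda>j. real j / real n)" using npos by (intro monoI) (simp add: divide_right_mono)
  have monoW: "mono (\<lambda>j. real j * (1 - p) / real n)" using npos plt1
    by (intro monoI) (simp add: divide_right_mono mult_right_mono)
  have Bcond: "real j * p \<le> B \<longleftrightarrow> j \<le> k" for j
  proof -
    have "real j * p \<le> B \<longleftrightarrow> real j * B \<le> real k * B" unfolding p_def using kpos
      by (simp add: field_simps)
    also have "\<dots> \<longleftrightarrow> j \<le> k" using assms by simp
    finally show ?thesis .
  qed
  have bcond: "real j * p \<le> b \<longleftrightarrow> j \<le> 1" for j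
  proof
    assume h: "real j * p \<le> b"
    show "j \<le> 1"
    proof (rule ccontr)
      assume "\<not> j \<le> 1" then have "real j \<ge> 2" by simp
      then have "real j * p \<ge> 2 * p" using ppos by (simp add: mult_right_mono)
      then show False using h pb2 by linarith
    qed
  next
    assume "j \<le> 1" then have "real j \<le> 1" by simp
    then have "real j * p \<le> p" using ppos by (simp add: mult_left_le_one_le)
    then show "real j * p \<le> b" using pb by linarith
  qed
  have RB: "max_reward A f c B = real k0 / real n"
    unfolding max_reward_def setR
    by (rule maxlem[OF finA]) (auto simp: cardA k0_def Bcond monoR)
  have Rb: "max_reward A f c b = 1 / real n"
    unfolding max_reward_def setR
    using maxlem[OF finA, of 1 "\<lambda>j. real j * p \<le> b" "\<lambda>j. real j / real n"] assms(4)
    using pb by (simp add: cardA bcond monoR)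
  have WB: "max_welfare A f c B = real k0 * (1 - p) / real n"
    unfolding max_welfare_def setW
    by (rule maxlem[OF finA]) (auto simp: cardA k0_def Bcond monoW)
  have Wb: "max_welfare A f c b = (1 - p) / real n"
    unfolding max_welfare_def setW
    using maxlem[OF finA, of 1 "\<lambda>j. real j * p \<le> b" "\<lambda>j. real j * (1 - p) / real n"] assms(4)
    using pb by (simp add: cardA bcond monoW)
  have val: "real_of_int (min (\<lceil>2 * B / b\<rceil> - 1) (int n)) = real k0"
    unfolding k0_def kint[symmetric] by simp
  have r1: "max_reward A f c B / max_reward A f c b = real k0"
    using RB Rb npos by simp
  have r2: "max_welfare A f c B / max_welfare A f c b = real k0"
    using WB Wb npos plt1 by simp
  show ?thesis
    apply (rule exI[of _ A], rule exI[of _ f], rule exI[of _ c])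
    using inst cardA add single r1 r2 val by simp
qed

end
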